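(* Let $\nu>0$ and $L_1,L_2>0$. For every $\gamma>\nu+1/2$ and every $Q>0$ with \[ Q\leq L_1^2\Big(\sum_{k\geq1}k^{2(\nu-\gamma)}\Big)^{-1}, \] one has \[ \tilde W(\gamma,Q)\cap\{f\in L_\infty(\mathbb{T}):\|f\|_\infty\geq L_2\}\subset\Lambda_\nu(L_1,L_2). \]
   Context: Let $\varphi_1\equiv1$, $\varphi_{2k}(x)=\sqrt2\cos(kx)$, $\varphi_{2k+1}(x)=\sqrt2\sin(kx)$ ($k\geq1$), orthonormal in $L_2$ of the uniform law on $[0,2\pi]$ with inner product $\langle f,g\rangle=\frac1{2\pi}\int_0^{2\pi}fg$; for a $2\pi$-periodic $f$ set $\beta_k(f)=\langle f,\varphi_k\rangle$. $L_2(\mathbb{T})$, $L_\infty(\mathbb{T})$ denote the corresponding spaces of $2\pi$-periodic functions. For $\gamma,Q>0$, $\tilde W(\gamma,Q)=\{f\in L_2(\mathbb{T}) : f=\sum_{k\geq1}\beta_k\varphi_k,\ \sum_{k\geq1}k^{2\gamma}\beta_k^2\leq Q\}$. For $\nu,L_1,L_2>0$, $\Lambda_\nu(L_1,L_2)=\{f\in L_\infty(\mathbb{T}):\sum_{k\geq1}k^\nu|\beta_k(f)|\leq L_1 \text{ and } \|f\|_\infty\geq L_2\}$. *)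

theory Defs
  imports "HOL-Analysis.Analysis" "HOL-Probability.Essential_Supremum"
begin

definition periodic2pi :: "(real \<Rightarrow> real) \<Rightarrow> bool" where
  "periodic2pi f \<longleftrightarrow> (\<forall>x. f (x + 2 * pi) = f x)"

text \<open>Trigonometric basis, indexed from 1: phi 1 = 1, phi (2k) = sqrt 2 cos(kx),
  phi (2k+1) = sqrt 2 sin(kx). The value at index 0 is irrelevant.\<close>
definition phi :: "nat \<Rightarrow> real \<Rightarrow> real" where
  "phi k x = (if k = 1 then 1
              else if even k then sqrt 2 * cos (real (k div 2) * x)
              else sqrt 2 * sin (real (k div 2) * x))"

definition beta :: "nat \<Rightarrow> (real \<Rightarrow> real) \<Rightarrow> real" where
  "beta k f = (1 / (2 * pi)) * (LINT x:{0..2*pi}|lborel. f x * phi k x)"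

definition L2T :: "(real \<Rightarrow> real) set" where
  "L2T = {f. periodic2pi f \<and> f \<in> borel_measurable borel
            \<and> set_integrable lborel {0..2*pi} (\<lambda>x. (f x)\<^sup>2)}"

definition sup_norm :: "(real \<Rightarrow> real) \<Rightarrow> ereal" where
  "sup_norm f = esssup (restrict_space lborel {0..2*pi}) (\<lambda>x. ereal \<bar>f x\<bar>)"

definition LinfT :: "(real \<Rightarrow> real) set" where
  "LinfT = {f. periodic2pi f \<and> f \<in> borel_measurable borel \<and> sup_norm f < \<infinity>}"

text \<open>Sobolev-type ellipsoid; the condition f = sum beta_k phi_k holds (in L2) for every
  f in L2T, so only the weighted summability bound is a genuine constraint.\<close>
definition Wtilde :: "real \<Rightarrow> real \<Rightarrow> (real \<Rightarrow> real) set" where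
  "Wtilde \<gamma> Q = {f \<in> L2T.
      summable (\<lambda>k. real (Suc k) powr (2 * \<gamma>) * (beta (Suc k) f)\<^sup>2)
      \<and> (\<Sum>k. real (Suc k) powr (2 * \<gamma>) * (beta (Suc k) f)\<^sup>2) \<le> Q}"

definition Lambda :: "real \<Rightarrow> real \<Rightarrow> real \<Rightarrow> (real \<Rightarrow> real) set" where
  "Lambda \<nu> L1 L2 = {f \<in> LinfT.
      summable (\<lambda>k. real (Suc k) powr \<nu> * \<bar>beta (Suc k) f\<bar>)
      \<and> (\<Sum>k. real (Suc k) powr \<nu> * \<bar>beta (Suc k) f\<bar>) \<le> L1
      \<and> sup_norm f \<ge> ereal L2}"

end

theory Submission
  imports Defs
begin

lemma sqpowr: "((x::real) powr g)\<^sup>2 = x powr (2 * g)"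
proof -
  have "((x::real) powr g)\<^sup>2 = x powr g * x powr g" by (rule power2_eq_square)
  also have "\<dots> = x powr (g + g)" by (rule powr_add[symmetric])
  also have "g + g = 2 * g" by simp
  finally show ?thesis .
qed

lemma a2h: "(real (Suc k) powr g * \<bar>B::real\<bar>)\<^sup>2 = real (Suc k) powr (2 * g) * B\<^sup>2"
  unfolding power_mult_distrib power2_abs sqpowr ..

lemma abh: "real (Suc k) powr g * \<bar>B\<bar> * real (Suc k) powr (v - g) = real (Suc k) powr v * \<bar>B\<bar>"
proof -
  have "real (Suc k) powr g * real (Suc k) powr (v - g) = real (Suc k) powr v"
    unfolding powr_add[symmetric] by simp
  then show ?thesis by (metis mult.commute mult.left_commute)
qed

theorem proposition5:
  fixes \<nu> L1 L2 \<gamma> Q :: real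
  assumes "\<nu> > 0" and "L1 > 0" and "L2 > 0"
    and "\<gamma> > \<nu> + 1/2" and "Q > 0"
    and "Q \<le> L1\<^sup>2 / (\<Sum>k. real (Suc k) powr (2 * (\<nu> - \<gamma>)))"
  shows "Wtilde \<gamma> Q \<inter> {f \<in> LinfT. sup_norm f \<ge> ereal L2} \<subseteq> Lambda \<nu> L1 L2"
proof
  fix f assume f: "f \<in> Wtilde \<gamma> Q \<inter> {f \<in> LinfT. sup_norm f \<ge> ereal L2}"
  define a where "a k = real (Suc k) powr \<gamma> * \<bar>beta (Suc k) f\<bar>" for k
  define b where "b k = real (Suc k) powr (\<nu> - \<gamma>)" for k
  define S where "S = (\<Sum>k. real (Suc k) powr (2 * (\<nu> - \<gamma>)))"
  have a2: "(a k)\<^sup>2 = real (Suc k) powr (2 * \<gamma>) * (beta (Suc k) f)\<^sup>2" for k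
    unfolding a_def by (rule a2h)
  have b2: "(b k)\<^sup>2 = real (Suc k) powr (2 * (\<nu> - \<gamma>))" for k
    unfolding b_def by (rule sqpowr)
  have ab: "a k * b k = real (Suc k) powr \<nu> * \<bar>beta (Suc k) f\<bar>" for k
    unfolding a_def b_def by (rule abh)
  have sa: "summable (\<lambda>k. (a k)\<^sup>2)" and sQ: "(\<Sum>k. (a k)\<^sup>2) \<le> Q"
    using f unfolding Wtilde_def a2 by auto
  have sb: "summable (\<lambda>k. (b k)\<^sup>2)"
  proof -
    have "summable (\<lambda>n. real n powr (2 * (\<nu> - \<gamma>)))"
      using assms(4) by (subst summable_real_powr_iff) simp
    then have "summable (\<lambda>n. real (Suc n) powr (2 * (\<nu> - \<gamma>)))"
      using summable_iff_shift[of "\<lambda>n. real n powr (2 * (\<nu> - \<gamma>))" 1] by simp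
    then show ?thesis unfolding b2 .
  qed
  have Sdef: "(\<Sum>k. (b k)\<^sup>2) = S" unfolding b2 S_def ..
  have Spos: "S > 0"
  proof -
    have "(\<Sum>k<1. (b k)\<^sup>2) \<le> (\<Sum>k. (b k)\<^sup>2)"
      by (rule sum_le_suminf[OF sb]) auto
    then have "(b 0)\<^sup>2 \<le> (\<Sum>k. (b k)\<^sup>2)" by simp
    moreover have "(b 0)\<^sup>2 > 0" unfolding b_def by simp
    ultimately show ?thesis using Sdef by linarith
  qed
  have QS0: "Q \<le> L1\<^sup>2 / S" using assms(6) unfolding S_def .
  have QS: "Q * S \<le> L1\<^sup>2" using QS0 Spos by (simp only: pos_le_divide_eq)
  have part: "(\<Sum>k<n. a k * b k) \<le> L1" for n
  proof -
    have "(\<Sum>k<n. a k * b k)\<^sup>2 \<le> (\<Sum>k<n. (a k)\<^sup>2) * (\<Sum>k<n. (b k)\<^sup>2)"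
      by (rule Cauchy_Schwarz_ineq_sum)
    also have "\<dots> \<le> (\<Sum>k. (a k)\<^sup>2) * (\<Sum>k. (b k)\<^sup>2)"
    proof (rule mult_mono)
      show "(\<Sum>k<n. (a k)\<^sup>2) \<le> (\<Sum>k. (a k)\<^sup>2)" by (rule sum_le_suminf[OF sa]) auto
      show "(\<Sum>k<n. (b k)\<^sup>2) \<le> (\<Sum>k. (b k)\<^sup>2)" by (rule sum_le_suminf[OF sb]) auto
      show "0 \<le> (\<Sum>k. (a k)\<^sup>2)" by (rule suminf_nonneg[OF sa]) auto
      show "0 \<le> (\<Sum>k<n. (b k)\<^sup>2)" by (rule sum_nonneg) auto
    qed
    also have "\<dots> \<le> Q * S" unfolding Sdef using sQ Spos by (rule mult_right_mono[OF _ less_imp_le])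
    also have "\<dots> \<le> L1\<^sup>2" by (rule QS)
    finally have "(\<Sum>k<n. a k * b k)\<^sup>2 \<le> L1\<^sup>2" .
    then show ?thesis using assms(2) by (rule power2_le_imp_le[OF _ less_imp_le])
  qed
  have nn: "0 \<le> a k * b k" for k unfolding a_def b_def by simp
  have sm: "summable (\<lambda>k. a k * b k)" by (rule summableI_nonneg_bounded[OF nn part])
  have le: "(\<Sum>k. a k * b k) \<le> L1" by (rule suminf_le_const[OF sm part])
  have sm': "summable (\<lambda>k. real (Suc k) powr \<nu> * \<bar>beta (Suc k) f\<bar>)" using sm unfolding ab .
  have le': "(\<Sum>k. real (Suc k) powr \<nu> * \<bar>beta (Suc k) f\<bar>) \<le> L1" using le unfolding ab .
  show "f \<in> Lambda \<nu> L1 L2"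
    using f sm' le' unfolding Lambda_def by blast
qed

end
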